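(* Let $\mathcal G$ be a connected rank-3 tensor Feynman graph with the data described in the context. Then \[ F_{\rm int}(\mathcal G)=-\big(\omega(\mathcal G_{\rm col})-g_{\partial\mathcal G}\big)+3V_++2V_m-N_{\rm ext}-(C_\partial-1)+2 . \]
   Context: Bubbles. Use colors $1,2,3$ for bubble edges and color $0$ for propagator lines. The tetrahedral bubble $\mathbf b_+$ is $K_4$ on $w_1,\dots,w_4$ with the following colored edges: \begin{itemize} \item $w_1w_2$ and $w_3w_4$ of color 1; \item $w_1w_3$ and $w_2w_4$ of color 2; \item $w_1w_4$ and $w_2w_3$ of color 3. \end{itemize} For $c\in\{1,2,3\}$, the melonic bubble $\mathbf b_c$ has vertices $w_1,\dots,w_4$ and the following edges: \begin{itemize} \item $w_1w_2$ doubled, carrying the two colors of $\{1,2,3\}\setminus\{c\}$; \item $w_3w_4$ doubled, carrying the two colors of $\{1,2,3\}\setminus\{c\}$; \item single edges $w_2w_3$ and $w_4w_1$ of color $c$. \end{itemize} Graphs. A graph $\mathcal G$ consists of the following data: \begin{itemize} \item $V=V_++V_m$ interaction vertices, each a copy of $\mathbf b_+$ ($V_+$ of them) or of some $\mathbf b_c$ ($V_m$ of them); \item $L$ internal lines of color 0, each joining two of the $4V$ bubble vertices, with each bubble vertex incident to at most one line; \item a color-0 external leg attached to each bubble vertex not incident to a line. \end{itemize} Let $N_{\rm ext}$ be the number of external legs, so $4V=2L+N_{\rm ext}$. The colored extension $\mathcal G_{\rm col}$ is the resulting 4-edge-colored graph, with $4V$ vertices, $L+6V$ edges and $N_{\rm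 ext}$ half-edges. Connected means $\mathcal G_{\rm col}$ is connected. Faces. For $c\in\{1,2,3\}$, a face of color $c$ is a connected component of the subgraph of $\mathcal G_{\rm col}$ formed by the color-0 edges and half-edges and the color-$c$ edges. It is internal if it is a cycle, and external if it is a path joining two external legs. $F_{\rm int}(\mathcal G)$ is the total number of internal faces. Boundary graph. The boundary graph $\partial\mathcal G$ is defined as follows: \begin{itemize} \item its vertices are the external legs; \item each external face of color $c$ gives an edge of color $c$ joining its two end legs. \end{itemize} $C_\partial$ is its number of connected components. $F_\partial$ is its number of bicolored cycles (cycles using exactly the edges of two colors $\{a,b\}\subset\{1,2,3\}$). Its genus $g_{\partial\mathcal G}$ is defined by \[ 2C_\partial-2g_{\partial\mathcal G}=N_{\rm ext}-\tfrac32N_{\rm ext}+F_\partial . \] Pinched jackets. The three jackets correspond to the three cyclic orders $(0,a,b,c)$ of the colors $0,1,2,3$ up to reversal; equivalently, to the choice of the unordered pair $\{a,c\}\subset\{1,2,3\}$ of colors adjacent to $0$. For such a jacket $J$, let $F_{\tilde J}$ be the sum of: \begin{itemize} \item the number of cycles of $\mathcal G_{\rm col}$ bicolored in one of the pairs $\{0,a\},\{a,b\},\{b,c\},\{c,0\}$; \item the number of bicolored cycles of $\partial\mathcal G$ with colors $\{a,c\}$. \end{itemize} The genus of the pinched jacket $\tilde J$ is defined by \[ 2-2g_{\tilde J}=4V-(L+6V)+F_{\tilde J}. \] Finally, $\omega(\mathcal G_{\rm col})=\sum_{J}g_{\tilde J}$ is the sum over the three pinched jackets. *)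

theory Defs
  imports Complex_Main
begin

text \<open>Bubble types: the tetrahedral bubble, or the melonic bubble b_c (c a colour in {1,2,3}).
  Bubble vertices w1..w4 are indexed 0..3. Colours 1,2,3 are bubble colours; colour 0 is the
  propagator colour.\<close>

datatype bubble = Tet | Mel nat

definition valid_bubble :: "bubble \<Rightarrow> bool" where
  "valid_bubble b = (case b of Tet \<Rightarrow> True | Mel c \<Rightarrow> c \<in> {1,2,3})"

definition bubble_edges :: "bubble \<Rightarrow> nat \<Rightarrow> nat set set" where
  "bubble_edges b c = (case b of
      Tet \<Rightarrow> (if c = 1 then {{0,1},{2,3}} else if c = 2 then {{0,2},{1,3}}
              else if c = 3 then {{0,3},{1,2}} else {})
    | Mel m \<Rightarrow> (if c \<notin> {1,2,3} then {}
              else if c = m then {{1,2},{3,0}} else {{0,1},{2,3}}))"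

text \<open>Bubble vertices of a graph with V bubbles: pairs (bubble index, local vertex).\<close>
definition bvert :: "nat \<Rightarrow> (nat \<times> nat) set" where
  "bvert V = {0..<V} \<times> {0..<4}"

definition col_edges :: "nat \<Rightarrow> (nat \<Rightarrow> bubble) \<Rightarrow> nat \<Rightarrow> (nat \<times> nat) set set" where
  "col_edges V bt c = {{(i,k),(i,l)} | i k l. i < V \<and> {k,l} \<in> bubble_edges (bt i) c}"

definition adj :: "'v set set \<Rightarrow> ('v \<times> 'v) set" where
  "adj E = {(x,y). {x,y} \<in> E}"

definition comps :: "'v set \<Rightarrow> 'v set set \<Rightarrow> 'v set set" where
  "comps X E = (\<lambda>x. {y \<in> X. (x,y) \<in> (adj E)\<^sup>*}) ` X"

text \<open>In a graph where every vertex meets at most one edge of colour a and at most one of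
  colour b (E_a, E_b), a connected component of the {a,b}-subgraph is a cycle iff every
  vertex of it meets an edge of colour a and an edge of colour b.\<close>
definition bicol_cycles :: "'v set \<Rightarrow> 'v set set \<Rightarrow> 'v set set \<Rightarrow> 'v set set" where
  "bicol_cycles X Ea Eb = {C \<in> comps X (Ea \<union> Eb).
      \<forall>x\<in>C. (\<exists>e\<in>Ea. x \<in> e) \<and> (\<exists>e\<in>Eb. x \<in> e)}"

definition valid_lines :: "nat \<Rightarrow> (nat \<times> nat) set set \<Rightarrow> bool" where
  "valid_lines V E0 = ((\<forall>e\<in>E0. \<exists>x y. e = {x,y} \<and> x \<noteq> y \<and> x \<in> bvert V \<and> y \<in> bvert V)
     \<and> (\<forall>e\<in>E0. \<forall>e'\<in>E0. e \<noteq> e' \<longrightarrow> e \<inter> e' = {}))"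

text \<open>Vertices carrying an external leg (legs are identified with their bubble vertex).\<close>
definition legs :: "nat \<Rightarrow> (nat \<times> nat) set set \<Rightarrow> (nat \<times> nat) set" where
  "legs V E0 = bvert V - \<Union>E0"

definition faces :: "nat \<Rightarrow> (nat \<Rightarrow> bubble) \<Rightarrow> (nat \<times> nat) set set \<Rightarrow> nat \<Rightarrow> (nat \<times> nat) set set" where
  "faces V bt E0 c = comps (bvert V) (E0 \<union> col_edges V bt c)"

definition int_faces :: "nat \<Rightarrow> (nat \<Rightarrow> bubble) \<Rightarrow> (nat \<times> nat) set set \<Rightarrow> nat \<Rightarrow> (nat \<times> nat) set set" where
  "int_faces V bt E0 c = bicol_cycles (bvert V) E0 (col_edges V bt c)"

definition F_int :: "nat \<Rightarrow> (nat \<Rightarrow> bubble) \<Rightarrow> (nat \<times> nat) set set \<Rightarrow> nat" where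
  "F_int V bt E0 = card (int_faces V bt E0 1) + card (int_faces V bt E0 2) + card (int_faces V bt E0 3)"

text \<open>Boundary graph edges of colour c: each external face (a face that is not a cycle, i.e. a
  path joining two legs) gives the edge joining its two end legs.\<close>
definition bdry_edges :: "nat \<Rightarrow> (nat \<Rightarrow> bubble) \<Rightarrow> (nat \<times> nat) set set \<Rightarrow> nat \<Rightarrow> (nat \<times> nat) set set" where
  "bdry_edges V bt E0 c = (\<lambda>C. C \<inter> legs V E0) ` (faces V bt E0 c - int_faces V bt E0 c)"

definition C_bdry :: "nat \<Rightarrow> (nat \<Rightarrow> bubble) \<Rightarrow> (nat \<times> nat) set set \<Rightarrow> nat" where
  "C_bdry V bt E0 = card (comps (legs V E0)
      (bdry_edges V bt E0 1 \<union> bdry_edges V bt E0 2 \<union> bdry_edges V bt E0 3))"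

definition bdry_cycles :: "nat \<Rightarrow> (nat \<Rightarrow> bubble) \<Rightarrow> (nat \<times> nat) set set \<Rightarrow> nat \<Rightarrow> nat \<Rightarrow> nat" where
  "bdry_cycles V bt E0 a b = card (bicol_cycles (legs V E0) (bdry_edges V bt E0 a) (bdry_edges V bt E0 b))"

definition F_bdry :: "nat \<Rightarrow> (nat \<Rightarrow> bubble) \<Rightarrow> (nat \<times> nat) set set \<Rightarrow> nat" where
  "F_bdry V bt E0 = bdry_cycles V bt E0 1 2 + bdry_cycles V bt E0 1 3 + bdry_cycles V bt E0 2 3"

definition N_ext :: "nat \<Rightarrow> (nat \<times> nat) set set \<Rightarrow> nat" where
  "N_ext V E0 = card (legs V E0)"

definition g_bdry :: "nat \<Rightarrow> (nat \<Rightarrow> bubble) \<Rightarrow> (nat \<times> nat) set set \<Rightarrow> real" where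
  "g_bdry V bt E0 = (2 * real (C_bdry V bt E0) - (real (N_ext V E0) - 3/2 * real (N_ext V E0)
                      + real (F_bdry V bt E0))) / 2"

definition colE :: "nat \<Rightarrow> (nat \<Rightarrow> bubble) \<Rightarrow> (nat \<times> nat) set set \<Rightarrow> nat \<Rightarrow> (nat \<times> nat) set set" where
  "colE V bt E0 c = (if c = 0 then E0 else col_edges V bt c)"

definition gcol_cycles :: "nat \<Rightarrow> (nat \<Rightarrow> bubble) \<Rightarrow> (nat \<times> nat) set set \<Rightarrow> nat \<Rightarrow> nat \<Rightarrow> nat" where
  "gcol_cycles V bt E0 a b = card (bicol_cycles (bvert V) (colE V bt E0 a) (colE V bt E0 b))"

text \<open>Pinched jacket with cyclic order (0,a,b,c): determined by the middle colour b,
  where {a,c} = {1,2,3} - {b} are the colours adjacent to 0.\<close>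
definition F_pjacket :: "nat \<Rightarrow> (nat \<Rightarrow> bubble) \<Rightarrow> (nat \<times> nat) set set \<Rightarrow> nat \<Rightarrow> nat \<Rightarrow> nat \<Rightarrow> nat" where
  "F_pjacket V bt E0 a b c = gcol_cycles V bt E0 0 a + gcol_cycles V bt E0 a b
      + gcol_cycles V bt E0 b c + gcol_cycles V bt E0 c 0 + bdry_cycles V bt E0 a c"

definition g_pjacket :: "nat \<Rightarrow> (nat \<Rightarrow> bubble) \<Rightarrow> (nat \<times> nat) set set \<Rightarrow> nat \<Rightarrow> nat \<Rightarrow> nat \<Rightarrow> real" where
  "g_pjacket V bt E0 a b c = (2 - (4 * real V - (real (card E0) + 6 * real V)
      + real (F_pjacket V bt E0 a b c))) / 2"

definition omega :: "nat \<Rightarrow> (nat \<Rightarrow> bubble) \<Rightarrow> (nat \<times> nat) set set \<Rightarrow> real" where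
  "omega V bt E0 = g_pjacket V bt E0 1 2 3 + g_pjacket V bt E0 1 3 2 + g_pjacket V bt E0 2 1 3"

definition V_tet :: "nat \<Rightarrow> (nat \<Rightarrow> bubble) \<Rightarrow> nat" where
  "V_tet V bt = card {i. i < V \<and> bt i = Tet}"

definition V_mel :: "nat \<Rightarrow> (nat \<Rightarrow> bubble) \<Rightarrow> nat" where
  "V_mel V bt = card {i. i < V \<and> bt i \<noteq> Tet}"

definition gcol_connected :: "nat \<Rightarrow> (nat \<Rightarrow> bubble) \<Rightarrow> (nat \<times> nat) set set \<Rightarrow> bool" where
  "gcol_connected V bt E0 = (card (comps (bvert V)
      (E0 \<union> col_edges V bt 1 \<union> col_edges V bt 2 \<union> col_edges V bt 3)) = 1)"

end

theory Submission imports Defs begin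

definition conn :: "bubble \<Rightarrow> nat \<Rightarrow> nat \<Rightarrow> bool" where
  "conn b a c = (case b of Tet \<Rightarrow> True | Mel m \<Rightarrow> m = a \<or> m = c)"

definition rep :: "bubble \<Rightarrow> nat \<Rightarrow> nat \<Rightarrow> nat \<Rightarrow> nat" where
  "rep b a c k = (if conn b a c then 0 else 2 * (k div 2))"

definition P2 where "P2 b a c k = (k = rep b a c k \<or> {k, rep b a c k} \<in> bubble_edges b a \<union> bubble_edges b c \<or>
     (\<exists>m\<in>{0,1,2,3::nat}. {k,m} \<in> bubble_edges b a \<union> bubble_edges b c \<and>
        {m, rep b a c k} \<in> bubble_edges b a \<union> bubble_edges b c))"

lemma P2all: "\<forall>b\<in>{Tet,Mel 1,Mel 2,Mel 3}. \<forall>ac\<in>{(1,2),(1,3),(2,1),(2,3),(3,1),(3,2)}. \<forall>k\<in>{0,1,2,3}. P2 b (fst ac) (snd ac) k"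
  by (simp add: P2_def rep_def conn_def bubble_edges_def doubleton_eq_iff)

lemma valid_cases: "valid_bubble b \<Longrightarrow> b = Tet \<or> b = Mel 1 \<or> b = Mel 2 \<or> b = Mel 3"
  by (cases b) (auto simp: valid_bubble_def)

lemma L1:
  assumes "valid_bubble b" "a \<in> {1,2,3}" "c \<in> {1,2,3}" "a \<noteq> c" "d \<in> {a,c}"
    "{k,l} \<in> bubble_edges b d"
  shows "rep b a c k = rep b a c l"
  using valid_cases[OF assms(1)] assms(2-6)
  by (auto simp: rep_def conn_def bubble_edges_def doubleton_eq_iff split: if_splits)

lemma L2:
  assumes "valid_bubble b" "a \<in> {1,2,3}" "c \<in> {1,2,3}" "a \<noteq> c" "k < 4"
  shows "P2 b a c k"
proof -
  have b: "b \<in> {Tet,Mel 1,Mel 2,Mel 3}" using valid_cases[OF assms(1)] by auto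
  have ac: "(a,c) \<in> {(1,2),(1,3),(2,1),(2,3),(3,1),(3,2)}" using assms(2-4) by auto
  have k: "k \<in> {0,1,2,3}" using assms(5) by auto
  have "\<forall>k\<in>{0,1,2,3}. P2 b (fst (a,c)) (snd (a,c)) k" using P2all b ac by blast
  then have "\<forall>k\<in>{0,1,2,3}. P2 b a c k" by simp
  then show ?thesis using k by blast
qed

lemma L3:
  assumes "valid_bubble b" "d \<in> {1,2,3}" "k < 4"
  shows "\<exists>l. {k,l} \<in> bubble_edges b d"
proof -
  have k: "k = 0 \<or> k = 1 \<or> k = 2 \<or> k = 3" using assms(3) by auto
  show ?thesis
  using valid_cases[OF assms(1)] assms(2) k
  by (auto simp: bubble_edges_def insert_commute)
qed

lemma col_in: "i < V \<Longrightarrow> {k,l} \<in> bubble_edges (bt i) d \<Longrightarrow> {(i,k),(i,l)} \<in> col_edges V bt d"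
  unfolding col_edges_def by (rule CollectI, rule exI[of _ i], rule exI[of _ k], rule exI[of _ l]) simp

lemma col_out: "e \<in> col_edges V bt d \<Longrightarrow> \<exists>i k l. e = {(i,k),(i,l)} \<and> i < V \<and> {k,l} \<in> bubble_edges (bt i) d"
  unfolding col_edges_def by (rule CollectD)

lemma adj_in:
  assumes "i < V" "{k,l} \<in> bubble_edges (bt i) d" "d \<in> {a,c}"
  shows "((i,k),(i,l)) \<in> adj (col_edges V bt a \<union> col_edges V bt c)"
proof -
  have "{(i,k),(i,l)} \<in> col_edges V bt d" using col_in assms(1,2) .
  then show ?thesis using assms(3) unfolding adj_def by auto
qed

lemma adj_out:
  assumes "(x,y) \<in> adj (col_edges V bt a \<union> col_edges V bt c)"
  shows "\<exists>i k l d. x = (i,k) \<and> y = (i,l) \<and> i < V \<and> d \<in> {a,c} \<and> {k,l} \<in> bubble_edges (bt i) d"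
proof -
  have "{x,y} \<in> col_edges V bt a \<or> {x,y} \<in> col_edges V bt c" using assms by (simp add: adj_def)
  then obtain d where d: "d \<in> {a,c}" "{x,y} \<in> col_edges V bt d" by blast
  obtain i k l where h0: "{x,y} = {(i,k),(i,l)}" "i < V" "{k,l} \<in> bubble_edges (bt i) d"
    using col_out[OF d(2)] by blast
  have h: "{x,y} = {(i,k),(i,l)}" "i < V" "d \<in> {a,c}" "{k,l} \<in> bubble_edges (bt i) d"
    using h0 d by auto
  from h(1) have "(x = (i,k) \<and> y = (i,l)) \<or> (x = (i,l) \<and> y = (i,k))"
    by (auto simp: doubleton_eq_iff)
  then show ?thesis
  proof
    assume "x = (i,k) \<and> y = (i,l)"
    then show ?thesis using h(2-4) by blast
  next
    assume xy: "x = (i,l) \<and> y = (i,k)"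
    have "{l,k} \<in> bubble_edges (bt i) d" using h(4) by (simp add: insert_commute)
    then show ?thesis using xy h(2,3) by blast
  qed
qed

lemma adj_sym: "(adj E)\<inverse> = adj E"
  by (auto simp: adj_def insert_commute)

lemma rtr_sym: "(x,y) \<in> (adj E)\<^sup>* \<Longrightarrow> (y,x) \<in> (adj E)\<^sup>*"
  by (metis adj_sym rtrancl_converseI)

definition lab :: "(nat \<Rightarrow> bubble) \<Rightarrow> nat \<Rightarrow> nat \<Rightarrow> nat \<times> nat \<Rightarrow> nat \<times> nat" where
  "lab bt a c x = (fst x, rep (bt (fst x)) a c (snd x))"

locale bloc =
  fixes V :: nat and bt :: "nat \<Rightarrow> bubble" and a c :: nat
  assumes valid: "\<forall>i<V. valid_bubble (bt i)" and a: "a \<in> {1,2,3}" and c: "c \<in> {1,2,3}"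
    and ac: "a \<noteq> c"
begin

abbreviation "E \<equiv> col_edges V bt a \<union> col_edges V bt c"

lemma path_lab:
  assumes "(x,y) \<in> (adj E)\<^sup>*"
  shows "lab bt a c y = lab bt a c x"
  using assms
proof (induction rule: rtrancl_induct)
  case base then show ?case by simp
next
  case (step y z)
  from adj_out[OF step(2)] obtain i k l d where
    h: "y = (i,k)" "z = (i,l)" "i < V" "d \<in> {a,c}" "{k,l} \<in> bubble_edges (bt i) d" by blast
  have "rep (bt i) a c k = rep (bt i) a c l"
    using L1[OF _ a c ac h(4) h(5)] valid h(3) by blast
  then have "lab bt a c z = lab bt a c y" using h by (simp add: lab_def)
  then show ?case using step(3) by simp
qed

lemma lab_path:
  assumes "x \<in> bvert V"
  shows "(x, lab bt a c x) \<in> (adj E)\<^sup>*"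
proof -
  obtain i k where x: "x = (i,k)" "i < V" "k < 4" using assms by (auto simp: bvert_def)
  let ?r = "rep (bt i) a c k"
  have P: "P2 (bt i) a c k" using L2 valid x a c ac by blast
  have lx: "lab bt a c x = (i, ?r)" using x by (simp add: lab_def)
  have e: "\<And>p q. {p,q} \<in> bubble_edges (bt i) a \<union> bubble_edges (bt i) c \<Longrightarrow> ((i,p),(i,q)) \<in> adj E"
    using adj_in[OF x(2)] by blast
  from P consider "k = ?r" | "{k, ?r} \<in> bubble_edges (bt i) a \<union> bubble_edges (bt i) c"
    | m where "{k,m} \<in> bubble_edges (bt i) a \<union> bubble_edges (bt i) c"
        "{m, ?r} \<in> bubble_edges (bt i) a \<union> bubble_edges (bt i) c"
    unfolding P2_def by blast
  then show ?thesis
  proof cases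
    case 1 then show ?thesis using x lx by simp
  next
    case 2 then show ?thesis using x lx e by auto
  next
    case 3
    then have "((i,k),(i,m)) \<in> adj E" "((i,m),(i,?r)) \<in> adj E" using e by auto
    then have "((i,k),(i,?r)) \<in> (adj E)\<^sup>*" by (meson converse_rtrancl_into_rtrancl r_into_rtrancl)
    then show ?thesis using x lx by simp
  qed
qed

lemma conn_iff:
  assumes "x \<in> bvert V" "y \<in> bvert V"
  shows "(x,y) \<in> (adj E)\<^sup>* \<longleftrightarrow> lab bt a c x = lab bt a c y"
proof
  assume "(x,y) \<in> (adj E)\<^sup>*"
  then have "lab bt a c y = lab bt a c x" by (rule path_lab)
  then show "lab bt a c x = lab bt a c y" by simp
next
  assume eq: "lab bt a c x = lab bt a c y"
  have p1: "(x, lab bt a c x) \<in> (adj E)\<^sup>*" using lab_path assms(1) .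
  have "(y, lab bt a c y) \<in> (adj E)\<^sup>*" using lab_path assms(2) .
  then have p2: "(lab bt a c x, y) \<in> (adj E)\<^sup>*" using eq rtr_sym by simp
  show "(x,y) \<in> (adj E)\<^sup>*" using rtrancl_trans[OF p1 p2] .
qed


lemma cover: "x \<in> bvert V \<Longrightarrow> d \<in> {1,2,3} \<Longrightarrow> \<exists>e\<in>col_edges V bt d. x \<in> e"
proof -
  assume x0: "x \<in> bvert V" and d: "d \<in> {1,2,3}"
  obtain i k where x: "x = (i,k)" "i < V" "k < 4" using x0 by (auto simp: bvert_def)
  obtain l where "{k,l} \<in> bubble_edges (bt i) d" using L3 valid x d by blast
  then have "{(i,k),(i,l)} \<in> col_edges V bt d" using x col_in by blast
  then show ?thesis using x by blast
qed

lemma bicol_eq: "bicol_cycles (bvert V) (col_edges V bt a) (col_edges V bt c) = comps (bvert V) E"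
  unfolding bicol_cycles_def comps_def using cover a c by fastforce

lemma comps_eq: "comps (bvert V) E = (\<lambda>l. {y \<in> bvert V. lab bt a c y = l}) ` (lab bt a c ` bvert V)"
  unfolding comps_def image_image using conn_iff by (intro image_cong) auto

lemma card_comps: "card (comps (bvert V) E) = card (lab bt a c ` bvert V)"
proof -
  have "inj_on (\<lambda>l. {y \<in> bvert V. lab bt a c y = l}) (lab bt a c ` bvert V)"
    by (rule inj_onI) blast
  then show ?thesis unfolding comps_eq by (rule card_image)
qed

lemma lab_img: "lab bt a c ` bvert V = (SIGMA i:{0..<V}. rep (bt i) a c ` {0..<4})"
  unfolding bvert_def lab_def by force

lemma card_rep: "card (rep b a c ` {0..<4}) = (if conn b a c then 1 else 2)"
proof -
  have "{0..<4::nat} = {0,1,2,3}" by auto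
  then show ?thesis by (simp add: rep_def)
qed

lemma gcol_val: "card (bicol_cycles (bvert V) (col_edges V bt a) (col_edges V bt c))
   = (\<Sum>i\<in>{0..<V}. if conn (bt i) a c then 1 else 2)"
  unfolding bicol_eq card_comps lab_img by (simp add: card_rep)

end


lemma bicol_sym: "bicol_cycles X A B = bicol_cycles X B A"
  unfolding bicol_cycles_def by (auto simp: Un_commute)

lemma gcol_bubble:
  assumes "\<forall>i<V. valid_bubble (bt i)" "a \<in> {1,2,3}" "c \<in> {1,2,3}" "a \<noteq> c"
  shows "gcol_cycles V bt E0 a c = (\<Sum>i\<in>{0..<V}. if conn (bt i) a c then 1 else 2)"
proof -
  interpret bloc V bt a c using assms by unfold_locales auto
  have "a \<noteq> 0" "c \<noteq> 0" using assms(2,3) by auto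
  then have "colE V bt E0 a = col_edges V bt a" "colE V bt E0 c = col_edges V bt c"
    by (simp_all add: colE_def)
  then show ?thesis unfolding gcol_cycles_def using gcol_val by simp
qed

lemma count6:
  assumes "valid_bubble b"
  shows "((if conn b 1 2 then 1 else 2) + (if conn b 2 3 then 1 else 2) + (if conn b 1 3 then 1 else 2)
    + (if conn b 3 2 then 1 else 2) + (if conn b 2 1 then 1 else 2) + (if conn b 1 3 then 1 else 2) :: nat)
    = (if b = Tet then 6 else 8)"
  using valid_cases[OF assms] by (auto simp: conn_def)

lemma split_sum:
  "(\<Sum>i\<in>{0..<V}. if bt i = Tet then (x::nat) else y) = x * V_tet V bt + y * V_mel V bt"
proof -
  have "(\<Sum>i\<in>{0..<V}. if bt i = Tet then (x::nat) else y)
      = (\<Sum>i\<in>{0..<V} \<inter> {i. bt i = Tet}. x) + (\<Sum>i\<in>{0..<V} \<inter> - {i. bt i = Tet}. y)"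
    by (rule sum.If_cases) simp
  moreover have "{0..<V} \<inter> {i. bt i = Tet} = {i. i < V \<and> bt i = Tet}" by auto
  moreover have "{0..<V} \<inter> - {i. bt i = Tet} = {i. i < V \<and> bt i \<noteq> Tet}" by auto
  ultimately show ?thesis by (simp add: V_tet_def V_mel_def mult.commute)
qed

lemma lines_count:
  assumes "valid_lines V E0"
  shows "4 * V = 2 * card E0 + N_ext V E0"
proof -
  have fb: "finite (bvert V)" by (simp add: bvert_def)
  have cb: "card (bvert V) = 4 * V" by (simp add: bvert_def)
  have v1: "\<forall>e\<in>E0. \<exists>x y. e = {x,y} \<and> x \<noteq> y \<and> x \<in> bvert V \<and> y \<in> bvert V"
    using assms unfolding valid_lines_def by (rule conjunct1)
  have v2: "\<forall>e\<in>E0. \<forall>e'\<in>E0. e \<noteq> e' \<longrightarrow> e \<inter> e' = {}"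
    using assms unfolding valid_lines_def by (rule conjunct2)
  have sub: "\<Union>E0 \<subseteq> bvert V"
  proof
    fix z assume "z \<in> \<Union>E0"
    then obtain e where e: "e \<in> E0" "z \<in> e" by (rule UnionE)
    obtain x y where "e = {x,y}" "x \<in> bvert V" "y \<in> bvert V" using v1 e(1) by blast
    then show "z \<in> bvert V" using e(2) by auto
  qed
  have "E0 \<subseteq> Pow (bvert V)" using sub by blast
  then have fE: "finite E0" using fb by (meson finite_Pow_iff finite_subset)
  have c2: "\<And>e. e \<in> E0 \<Longrightarrow> card e = 2"
  proof -
    fix e assume "e \<in> E0"
    then obtain x y where "e = {x,y}" "x \<noteq> y" using v1 by blast
    then show "card e = 2" by simp
  qed
  have fe: "\<And>e. e \<in> E0 \<Longrightarrow> finite e"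
  proof -
    fix e assume "e \<in> E0"
    then obtain x y where "e = {x,y}" using v1 by blast
    then show "finite e" by simp
  qed
  have pw: "pairwise disjnt E0" using v2 unfolding pairwise_def disjnt_def by blast
  have "card (\<Union>E0) = sum card E0" by (rule card_Union_disjoint[OF pw fe])
  also have "\<dots> = 2 * card E0" using c2 by simp
  finally have cu: "card (\<Union>E0) = 2 * card E0" .
  have "N_ext V E0 = card (bvert V) - card (\<Union>E0)"
    unfolding N_ext_def legs_def using sub fb by (meson card_Diff_subset finite_subset)
  moreover have "card (\<Union>E0) \<le> card (bvert V)" using sub fb by (simp add: card_mono)
  ultimately show ?thesis using cb cu by linarith
qed

theorem proposition1:
  fixes V :: nat and bt :: "nat \<Rightarrow> bubble" and E0 :: "(nat \<times> nat) set set"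
  assumes "\<forall>i<V. valid_bubble (bt i)"
    and "valid_lines V E0"
    and "gcol_connected V bt E0"
  shows "real (F_int V bt E0) =
    - (omega V bt E0 - g_bdry V bt E0) + 3 * real (V_tet V bt) + 2 * real (V_mel V bt)
    - real (N_ext V E0) - (real (C_bdry V bt E0) - 1) + 2"
proof -
  note gb = gcol_bubble[OF assms(1)]
  have "gcol_cycles V bt E0 1 2 + gcol_cycles V bt E0 2 3 + gcol_cycles V bt E0 1 3
      + gcol_cycles V bt E0 3 2 + gcol_cycles V bt E0 2 1 + gcol_cycles V bt E0 1 3
      = (\<Sum>i\<in>{0..<V}. (if conn (bt i) 1 2 then 1 else 2) + (if conn (bt i) 2 3 then 1 else 2)
          + (if conn (bt i) 1 3 then 1 else 2) + (if conn (bt i) 3 2 then 1 else 2)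
          + (if conn (bt i) 2 1 then 1 else 2) + (if conn (bt i) 1 3 then 1 else 2))"
    by (simp add: gb sum.distrib)
  also have "\<dots> = (\<Sum>i\<in>{0..<V}. if bt i = Tet then 6 else 8)"
    using count6 assms(1) by (intro sum.cong) auto
  also have "\<dots> = 6 * V_tet V bt + 8 * V_mel V bt" by (rule split_sum)
  finally have hB: "gcol_cycles V bt E0 1 2 + gcol_cycles V bt E0 2 3 + gcol_cycles V bt E0 1 3
      + gcol_cycles V bt E0 3 2 + gcol_cycles V bt E0 2 1 + gcol_cycles V bt E0 1 3
      = 6 * V_tet V bt + 8 * V_mel V bt" .
  have "V = (\<Sum>i\<in>{0..<V}. if bt i = Tet then 1 else (1::nat))" by simp
  then have hV: "V = V_tet V bt + V_mel V bt" using split_sum[where x=1 and y=1] by simp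
  have hN: "4 * V = 2 * card E0 + N_ext V E0" using lines_count assms(2) .
  have f0: "\<And>c. c \<noteq> 0 \<Longrightarrow> gcol_cycles V bt E0 0 c = card (int_faces V bt E0 c)"
    unfolding gcol_cycles_def colE_def int_faces_def by simp
  have f1: "\<And>c. c \<noteq> 0 \<Longrightarrow> gcol_cycles V bt E0 c 0 = card (int_faces V bt E0 c)"
    unfolding gcol_cycles_def colE_def int_faces_def by (simp add: bicol_sym)
  have rB: "real (gcol_cycles V bt E0 1 2) + real (gcol_cycles V bt E0 2 3) + real (gcol_cycles V bt E0 1 3)
      + real (gcol_cycles V bt E0 3 2) + real (gcol_cycles V bt E0 2 1) + real (gcol_cycles V bt E0 1 3)
      = 6 * real (V_tet V bt) + 8 * real (V_mel V bt)"
    using hB by (metis (mono_tags, lifting) of_nat_add of_nat_mult of_nat_numeral)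
  have rV: "real V = real (V_tet V bt) + real (V_mel V bt)" using hV by simp
  have rN: "4 * real V = 2 * real (card E0) + real (N_ext V E0)" using hN by (metis of_nat_add of_nat_mult of_nat_numeral)
  have r0: "real (gcol_cycles V bt E0 0 1) = real (card (int_faces V bt E0 1))"
     "real (gcol_cycles V bt E0 0 2) = real (card (int_faces V bt E0 2))"
     "real (gcol_cycles V bt E0 0 3) = real (card (int_faces V bt E0 3))"
     "real (gcol_cycles V bt E0 1 0) = real (card (int_faces V bt E0 1))"
     "real (gcol_cycles V bt E0 2 0) = real (card (int_faces V bt E0 2))"
     "real (gcol_cycles V bt E0 3 0) = real (card (int_faces V bt E0 3))"
    using f0[of 1] f0[of 2] f0[of 3] f1[of 1] f1[of 2] f1[of 3] by simp_all
  have om: "2 * omega V bt E0 = 6 + 6 * real V + 3 * real (card E0)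
     - 2 * (real (card (int_faces V bt E0 1)) + real (card (int_faces V bt E0 2)) + real (card (int_faces V bt E0 3)))
     - (6 * real (V_tet V bt) + 8 * real (V_mel V bt))
     - (real (bdry_cycles V bt E0 1 2) + real (bdry_cycles V bt E0 1 3) + real (bdry_cycles V bt E0 2 3))"
    unfolding omega_def g_pjacket_def F_pjacket_def of_nat_add
    using rB r0 by (simp add: field_simps)
  have gb2: "2 * g_bdry V bt E0 = 2 * real (C_bdry V bt E0) + real (N_ext V E0) / 2
     - (real (bdry_cycles V bt E0 1 2) + real (bdry_cycles V bt E0 1 3) + real (bdry_cycles V bt E0 2 3))"
    unfolding g_bdry_def F_bdry_def of_nat_add by (simp add: field_simps)
  show ?thesis
    unfolding F_int_def of_nat_add
    using om gb2 rV rN by argo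
qed

end
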